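(* Let $k,t\ge1$ and $r\ge1$ be integers and let $G$ be the $(k,t)$-split graph with $r$ parts. If $r=1$ and $t\ge2$, then $a(G)=\kappa(G)$. If $r\ge2$, then $a(G)\ne\kappa(G)$.
   Context: For integers $k,t,r\ge1$, the $(k,t)$-split graph with $r$ parts is the graph whose vertex set is the disjoint union $S_1\cup\dots\cup S_r\cup A_1\cup\dots\cup A_r$ with $|S_i|=k$ and $|A_i|=t$, where $S_1\cup\dots\cup S_r$ is a clique, $A_1\cup\dots\cup A_r$ is an independent set, and each vertex of $A_i$ is adjacent exactly to the vertices of $S_i$. The Laplacian matrix is $L(G)=D(G)-A(G)$; $a(G)$, the algebraic connectivity, is its second smallest eigenvalue (with multiplicity). $\kappa(G)$ is the vertex connectivity of $G$ (minimum size of a vertex set whose removal disconnects $G$). *)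

theory Defs
  imports "Jordan_Normal_Form.Char_Poly" "HOL-Library.Multiset"
begin

text \<open>Graphs on the vertex set {0..<n}, given by a symmetric irreflexive adjacency relation.\<close>

definition degree :: "nat \<Rightarrow> (nat \<Rightarrow> nat \<Rightarrow> bool) \<Rightarrow> nat \<Rightarrow> nat" where
  "degree n adj v = card {w. w < n \<and> adj v w}"

definition laplacian :: "nat \<Rightarrow> (nat \<Rightarrow> nat \<Rightarrow> bool) \<Rightarrow> real mat" where
  "laplacian n adj = mat n n (\<lambda>(i,j). if i = j then real (degree n adj i)
                                        else if adj i j then -1 else 0)"

definition laplacian_eigenvalues :: "nat \<Rightarrow> (nat \<Rightarrow> nat \<Rightarrow> bool) \<Rightarrow> real list" where
  "laplacian_eigenvalues n adj = sorted_list_of_multiset (proots (char_poly (laplacian n adj)))"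

definition algebraic_connectivity :: "nat \<Rightarrow> (nat \<Rightarrow> nat \<Rightarrow> bool) \<Rightarrow> real" where
  "algebraic_connectivity n adj = laplacian_eigenvalues n adj ! 1"

definition connected_on :: "nat set \<Rightarrow> (nat \<Rightarrow> nat \<Rightarrow> bool) \<Rightarrow> bool" where
  "connected_on W adj \<longleftrightarrow>
     (\<forall>u\<in>W. \<forall>v\<in>W. (\<lambda>x y. x \<in> W \<and> y \<in> W \<and> adj x y)\<^sup>*\<^sup>* u v)"

definition is_vertex_cut :: "nat \<Rightarrow> (nat \<Rightarrow> nat \<Rightarrow> bool) \<Rightarrow> nat set \<Rightarrow> bool" where
  "is_vertex_cut n adj X \<longleftrightarrow> X \<subseteq> {0..<n} \<and> \<not> connected_on ({0..<n} - X) adj"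

text \<open>Vertex connectivity (convention n-1 for graphs without a vertex cut, i.e. complete graphs).\<close>
definition vertex_connectivity :: "nat \<Rightarrow> (nat \<Rightarrow> nat \<Rightarrow> bool) \<Rightarrow> nat" where
  "vertex_connectivity n adj =
     (if \<exists>X. is_vertex_cut n adj X then Min {card X | X. is_vertex_cut n adj X} else n - 1)"

text \<open>Vertices 0..<r*(k+t):
  S_i = {i*k ..< (i+1)*k} for i<r (together a clique, vertices < r*k),
  A_i = {r*k + i*t ..< r*k + (i+1)*t} (independent), each vertex of A_i adjacent exactly to S_i.\<close>
definition split_n :: "nat \<Rightarrow> nat \<Rightarrow> nat \<Rightarrow> nat" where
  "split_n k t r = r * (k + t)"

definition split_adj :: "nat \<Rightarrow> nat \<Rightarrow> nat \<Rightarrow> nat \<Rightarrow> nat \<Rightarrow> bool" where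
  "split_adj k t r u v \<longleftrightarrow> u < r*(k+t) \<and> v < r*(k+t) \<and> u \<noteq> v \<and>
     ((u < r*k \<and> v < r*k) \<or>
      (u < r*k \<and> r*k \<le> v \<and> u div k = (v - r*k) div t) \<or>
      (v < r*k \<and> r*k \<le> u \<and> v div k = (u - r*k) div t))"

end

theory Submission imports Defs begin
lemma div_eq_range: "(t::nat) > 0 \<Longrightarrow> (x div t = p) \<longleftrightarrow> (p*t \<le> x \<and> x < p*t + t)"
  by (metis add.commute div_nat_eqI div_times_less_eq_dividend
    dividend_less_div_times mult.commute mult_Suc)

lemma part_lt: "(k::nat) > 0 \<Longrightarrow> u < r*k \<Longrightarrow> u div k < r"
  by (simp add: less_mult_imp_div_less)

lemma part_le: "(k::nat) > 0 \<Longrightarrow> u < r*k \<Longrightarrow> (u div k)*k + k \<le> r*k"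
proof -
  assume "k > 0" "u < r*k"
  then have "Suc (u div k) \<le> r" using part_lt by (simp add: Suc_le_eq)
  then have "Suc (u div k) * k \<le> r * k" by (rule mult_le_mono1)
  then show ?thesis by simp
qed

lemma part_le2: "(k::nat) > 0 \<Longrightarrow> u < r*k \<Longrightarrow> (u div k)*t + t \<le> r*t"
proof -
  assume "k > 0" "u < r*k"
  then have "Suc (u div k) \<le> r" using part_lt by (simp add: Suc_le_eq)
  then have "Suc (u div k) * t \<le> r * t" by (rule mult_le_mono1)
  then show ?thesis by simp
qed

lemma nbrs_S:
  assumes k: "k > 0" and t: "t > 0" and u: "u < r*k"
  shows "{j. j < r*(k+t) \<and> split_adj k t r u j} =
     ({0..<r*k} - {u}) \<union> {r*k + (u div k)*t ..< r*k + (u div k)*t + t}"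
proof -
  have pl: "(u div k)*t + t \<le> r*t" using part_le2[OF k u] .
  show ?thesis
  proof (rule Set.set_eqI, rule iffI)
    fix j assume "j \<in> {j. j < r*(k+t) \<and> split_adj k t r u j}"
    then have j: "j < r*(k+t)" "u \<noteq> j" and
      c: "j < r*k \<or> (r*k \<le> j \<and> u div k = (j - r*k) div t)"
      using u unfolding split_adj_def by auto
    show "j \<in> ({0..<r*k} - {u}) \<union> {r*k + (u div k)*t ..< r*k + (u div k)*t + t}"
    proof (cases "j < r*k")
      case True then show ?thesis using j by auto
    next
      case False
      then have "r*k \<le> j" "u div k = (j - r*k) div t" using c by auto
      then have "(u div k)*t \<le> j - r*k \<and> j - r*k < (u div k)*t + t"
        using div_eq_range[OF t, of "j - r*k" "u div k"] by simp
      then show ?thesis using \<open>r*k \<le> j\<close> by auto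
    qed
  next
    fix j assume j: "j \<in> ({0..<r*k} - {u}) \<union> {r*k + (u div k)*t ..< r*k + (u div k)*t + t}"
    show "j \<in> {j. j < r*(k+t) \<and> split_adj k t r u j}"
    proof (cases "j < r*k")
      case True
      then show ?thesis using j u unfolding split_adj_def by (auto simp: algebra_simps)
    next
      case False
      then have j2: "r*k + (u div k)*t \<le> j" "j < r*k + (u div k)*t + t" using j by auto
      then have jn: "j < r*(k+t)" using pl by (simp add: algebra_simps)
      have "(u div k)*t \<le> j - r*k" "j - r*k < (u div k)*t + t" using j2 by arith+
      then have "(j - r*k) div t = u div k"
        using div_eq_range[OF t, of "j - r*k" "u div k"] by simp
      then show ?thesis using jn False u unfolding split_adj_def by auto
    qed
  qed
qed

lemma nbrs_A:
  assumes k: "k > 0" and t: "t > 0" and u1: "r*k \<le> u" and u2: "u < r*(k+t)"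
  shows "{j. j < r*(k+t) \<and> split_adj k t r u j} =
     {((u - r*k) div t)*k ..< ((u - r*k) div t)*k + k}"
proof -
  have "u - r*k < r*t" using u1 u2 by (simp add: algebra_simps)
  then have pl: "((u - r*k) div t)*k + k \<le> r*k" using part_le2[OF t] by simp
  show ?thesis
  proof (rule Set.set_eqI, rule iffI)
    fix j assume "j \<in> {j. j < r*(k+t) \<and> split_adj k t r u j}"
    then have "j < r*k" "j div k = (u - r*k) div t"
      using u1 unfolding split_adj_def by auto
    then show "j \<in> {((u - r*k) div t)*k ..< ((u - r*k) div t)*k + k}"
      using div_eq_range[OF k, of j "(u - r*k) div t"] by simp
  next
    fix j assume j: "j \<in> {((u - r*k) div t)*k ..< ((u - r*k) div t)*k + k}"
    have jk: "j < r*k" using j pl by auto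
    have "j div k = (u - r*k) div t" using div_eq_range[OF k, of j "(u - r*k) div t"] j by simp
    then show "j \<in> {j. j < r*(k+t) \<and> split_adj k t r u j}"
      using jk u1 u2 unfolding split_adj_def by (auto simp: algebra_simps)
  qed
qed
lemma deg_S:
  assumes k: "k > 0" and t: "t > 0" and u: "u < r*k"
  shows "degree (r*(k+t)) (split_adj k t r) u = r*k - 1 + t"
proof -
  have d: "({0..<r*k} - {u}) \<inter> {r*k + (u div k)*t ..< r*k + (u div k)*t + t} = {}" by auto
  have "card (({0..<r*k} - {u}) \<union> {r*k + (u div k)*t ..< r*k + (u div k)*t + t})
      = card ({0..<r*k} - {u}) + card {r*k + (u div k)*t ..< r*k + (u div k)*t + t}"
    by (rule card_Un_disjoint) (use d in auto)
  also have "\<dots> = r*k - 1 + t" using u by simp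
  finally show ?thesis unfolding degree_def nbrs_S[OF k t u] .
qed

lemma deg_A:
  assumes k: "k > 0" and t: "t > 0" and u1: "r*k \<le> u" and u2: "u < r*(k+t)"
  shows "degree (r*(k+t)) (split_adj k t r) u = k"
  unfolding degree_def nbrs_A[OF k t u1 u2] by simp

lemma L_sum_generic:
  fixes x :: "nat \<Rightarrow> real"
  assumes i: "i < n" and irr: "\<not> adj i i"
  shows "(\<Sum>j<n. laplacian n adj $$ (i,j) * x j)
     = real (degree n adj i) * x i - (\<Sum>j\<in>{j. j<n \<and> adj i j}. x j)"
proof -
  have "(\<Sum>j<n. laplacian n adj $$ (i,j) * x j)
     = (\<Sum>j<n. (if j = i then real (degree n adj i) * x i else 0) + (if adj i j then - x j else 0))"
    by (rule sum.cong) (use i irr in \<open>auto simp: laplacian_def\<close>)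
  also have "\<dots> = real (degree n adj i) * x i + (\<Sum>j<n. if adj i j then - x j else 0)"
    using i by (simp add: sum.distrib)
  also have "(\<Sum>j<n. if adj i j then - x j else 0) = - (\<Sum>j\<in>{j. j<n \<and> adj i j}. x j)"
    by (simp add: sum.If_cases sum_negf Collect_conj_eq lessThan_def Int_commute)
  finally show ?thesis by simp
qed

lemma L_carrier: "laplacian n adj \<in> carrier_mat n n"
  by (simp add: laplacian_def)

lemma mult_vec_eq:
  assumes "A \<in> carrier_mat n n" "dim_vec v = n" "i < n"
  shows "(A *\<^sub>v v) $ i = (\<Sum>j<n. A $$ (i,j) * v $ j)"
  using assms by (auto simp: scalar_prod_def atLeast0LessThan intro!: sum.cong)

lemma L_S:
  fixes x :: "nat \<Rightarrow> real"
  assumes k: "k > 0" and t: "t > 0" and u: "u < r*k"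
  shows "(\<Sum>j<r*(k+t). laplacian (r*(k+t)) (split_adj k t r) $$ (u,j) * x j)
     = (real r * real k + real t) * x u - (\<Sum>j<r*k. x j)
       - (\<Sum>j\<in>{r*k + (u div k)*t ..< r*k + (u div k)*t + t}. x j)"
proof -
  have un: "u < r*(k+t)" using u by (simp add: algebra_simps)
  have irr: "\<not> split_adj k t r u u" by (simp add: split_adj_def)
  have d: "({0..<r*k} - {u}) \<inter> {r*k + (u div k)*t ..< r*k + (u div k)*t + t} = {}" by auto
  have "(\<Sum>j\<in>{j. j < r*(k+t) \<and> split_adj k t r u j}. x j)
      = (\<Sum>j\<in>{0..<r*k} - {u}. x j) + (\<Sum>j\<in>{r*k + (u div k)*t ..< r*k + (u div k)*t + t}. x j)"
    unfolding nbrs_S[OF k t u] by (rule sum.union_disjoint) (use d in auto)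
  also have "(\<Sum>j\<in>{0..<r*k} - {u}. x j) = (\<Sum>j<r*k. x j) - x u"
    using u by (simp add: sum_diff1 atLeast0LessThan)
  finally have e: "(\<Sum>j\<in>{j. j < r*(k+t) \<and> split_adj k t r u j}. x j) = 
     (\<Sum>j<r*k. x j) - x u + (\<Sum>j\<in>{r*k + (u div k)*t ..< r*k + (u div k)*t + t}. x j)" .
  have "1 \<le> r*k" using u by linarith
  then have rk: "real (r*k - 1 + t) = real r * real k - 1 + real t"
    by (simp only: of_nat_add of_nat_diff of_nat_mult)
  show ?thesis unfolding L_sum_generic[where adj="split_adj k t r" and x=x, OF un irr] deg_S[OF k t u] e rk by (simp add: algebra_simps)
qed

lemma L_A:
  fixes x :: "nat \<Rightarrow> real"
  assumes k: "k > 0" and t: "t > 0" and u1: "r*k \<le> u" and u2: "u < r*(k+t)"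
  shows "(\<Sum>j<r*(k+t). laplacian (r*(k+t)) (split_adj k t r) $$ (u,j) * x j)
     = real k * x u - (\<Sum>j\<in>{((u - r*k) div t)*k ..< ((u - r*k) div t)*k + k}. x j)"
proof -
  have irr: "\<not> split_adj k t r u u" by (simp add: split_adj_def)
  show ?thesis unfolding L_sum_generic[where adj="split_adj k t r" and x=x, OF u2 irr] deg_A[OF k t u1 u2] nbrs_A[OF k t u1 u2] by simp
qed
lemma adj_sym: "split_adj k t r u v = split_adj k t r v u"
  unfolding split_adj_def by auto

lemma rtrancl_stuck:
  assumes "R\<^sup>*\<^sup>* u v" and "\<And>y. \<not> R u y"
  shows "v = u"
  using assms by (induction rule: converse_rtranclp_induct) auto

lemma cut_exists:
  assumes k: "k > 0" and t: "t > 0" and c: "(r = 1 \<and> t \<ge> 2) \<or> r \<ge> 2"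
  shows "is_vertex_cut (r*(k+t)) (split_adj k t r) {0..<k}"
proof -
  let ?n = "r*(k+t)" and ?W = "{0..<r*(k+t)} - {0..<k}"
  let ?R = "\<lambda>x y. x \<in> ?W \<and> y \<in> ?W \<and> split_adj k t r x y"
  have r1: "r \<ge> 1" using c by auto
  define u where "u = r*k"
  define v where "v = (if r = 1 then r*k + 1 else k)"
  have rk: "k \<le> r*k" using r1 by simp
  have un: "u < ?n" using t r1 unfolding u_def by (simp add: algebra_simps)
  have uW: "u \<in> ?W" using un rk unfolding u_def by auto
  have vW: "v \<in> ?W"
  proof (cases "r = 1")
    case True then show ?thesis using c unfolding v_def by auto
  next
    case False then have "r \<ge> 2" using r1 by simp
    then have "k < r*k" using k by (metis less_le_trans mult_less_cancel2 nat_mult_1 one_less_numeral_iff semiring_norm(76) nat_mult_le_cancel_disj)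
    moreover have "r*k \<le> r*(k+t)" by simp
    ultimately have "k < r*(k+t)" by linarith
    then show ?thesis using False unfolding v_def by simp
  qed
  have uv: "u \<noteq> v" unfolding u_def v_def using k r1 by auto
  have nb: "\<And>y. \<not> ?R u y"
  proof
    fix y assume "?R u y"
    then have "y \<in> {j. j < ?n \<and> split_adj k t r u j}" "y \<notin> {0..<k}" by auto
    then show False unfolding nbrs_A[OF k t _ un, unfolded u_def, OF order_refl, folded u_def]
      unfolding u_def by simp
  qed
  have "\<not> ?R\<^sup>*\<^sup>* u v" using rtrancl_stuck[of ?R u v] nb uv by blast
  then have "\<not> connected_on ?W (split_adj k t r)" unfolding connected_on_def using uW vW by blast
  moreover have "k \<le> ?n" using un rk unfolding u_def by linarith
  then have "{0..<k} \<subseteq> {0..<?n}" by auto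
  ultimately show ?thesis unfolding is_vertex_cut_def by blast
qed

lemma small_not_cut:
  assumes k: "k > 0" and t: "t > 0" and X: "X \<subseteq> {0..<r*(k+t)}" and cX: "card X < k"
  shows "connected_on ({0..<r*(k+t)} - X) (split_adj k t r)"
proof -
  let ?n = "r*(k+t)" and ?W = "{0..<r*(k+t)} - X"
  let ?R = "\<lambda>x y. x \<in> ?W \<and> y \<in> ?W \<and> split_adj k t r x y"
  have fX: "finite X" using X finite_subset by blast
  have hub: "\<exists>s. s \<in> ?W \<and> s < r*k \<and> ?R\<^sup>*\<^sup>* u s \<and> ?R\<^sup>*\<^sup>* s u" if u: "u \<in> ?W" for u
  proof (cases "u < r*k")
    case True then show ?thesis using u by blast
  next
    case False
    let ?p = "(u - r*k) div t"
    let ?Sp = "{?p*k ..< ?p*k + k}"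
    have un: "u < ?n" using u by auto
    have cS: "card ?Sp = k" by simp
    have "\<not> ?Sp \<subseteq> X"
    proof
      assume "?Sp \<subseteq> X"
      then have "card ?Sp \<le> card X" by (rule card_mono[OF fX])
      then show False using cX cS by simp
    qed
    then obtain s where s: "s \<in> ?Sp" "s \<notin> X" by blast
    have ge: "r*k \<le> u" using False by simp
    have "s \<in> {j. j < ?n \<and> split_adj k t r u j}" unfolding nbrs_A[OF k t ge un] using s(1) .
    then have sn: "s < ?n" and a: "split_adj k t r u s" by auto
    have sk: "s < r*k" using a False unfolding split_adj_def by linarith
    have sW: "s \<in> ?W" using sn s by auto
    have a2: "split_adj k t r s u" using a adj_sym[of k t r u s] by simp
    have "?R u s" using u sW a by blast
    moreover have "?R s u" using u sW a2 by blast
    ultimately show ?thesis using sW sk by blast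
  qed
  show ?thesis unfolding connected_on_def
  proof (intro ballI)
    fix u v assume u: "u \<in> ?W" and v: "v \<in> ?W"
    obtain su where su: "su \<in> ?W" "su < r*k" "?R\<^sup>*\<^sup>* u su" using hub[OF u] by blast
    obtain sv where sv: "sv \<in> ?W" "sv < r*k" "?R\<^sup>*\<^sup>* sv v" using hub[OF v] by blast
    have "?R\<^sup>*\<^sup>* su sv"
    proof (cases "su = sv")
      case True then show ?thesis by simp
    next
      case False
      then have "split_adj k t r su sv" using su(1,2) sv(1,2) unfolding split_adj_def by simp
      then have "?R su sv" using su(1) sv(1) by blast
      then show ?thesis by blast
    qed
    then show "?R\<^sup>*\<^sup>* u v" using su(3) sv(3) by (meson rtranclp_trans)
  qed
qed

lemma kappa:
  assumes k: "k > 0" and t: "t > 0" and c: "(r = 1 \<and> t \<ge> 2) \<or> r \<ge> 2"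
  shows "vertex_connectivity (r*(k+t)) (split_adj k t r) = k"
proof -
  let ?C = "{card X | X. is_vertex_cut (r*(k+t)) (split_adj k t r) X}"
  have ex: "\<exists>X. is_vertex_cut (r*(k+t)) (split_adj k t r) X" using cut_exists[OF k t c] by blast
  have kin: "k \<in> ?C" using cut_exists[OF k t c] by force
  have lb: "\<And>y. y \<in> ?C \<Longrightarrow> k \<le> y"
  proof -
    fix y assume "y \<in> ?C"
    then obtain X where X: "y = card X" "is_vertex_cut (r*(k+t)) (split_adj k t r) X" by blast
    show "k \<le> y"
    proof (rule ccontr)
      assume "\<not> k \<le> y"
      then have cx: "card X < k" using X by simp
      show False using small_not_cut[OF k t _ cx] X unfolding is_vertex_cut_def by blast
    qed
  qed
  have fin: "finite ?C"
  proof (rule finite_subset[of _ "{..r*(k+t)}"])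
    show "?C \<subseteq> {..r*(k+t)}"
    proof
      fix y assume "y \<in> ?C"
      then obtain X where X: "y = card X" "X \<subseteq> {0..<r*(k+t)}" unfolding is_vertex_cut_def by blast
      then have "card X \<le> card {0..<r*(k+t)}" by (intro card_mono) auto
      then show "y \<in> {..r*(k+t)}" using X by simp
    qed
  qed simp
  have "Min ?C = k" by (rule Min_eqI[OF fin lb kin])
  then show ?thesis unfolding vertex_connectivity_def using ex by simp
qed
lemma sum_blocks:
  fixes h :: "nat \<Rightarrow> real"
  assumes k: "k > 0"
  shows "(\<Sum>j<r*k. h (j div k)) = real k * (\<Sum>p<r. h p)"
proof (induction r)
  case 0 then show ?case by simp
next
  case (Suc r)
  have e: "{..<Suc r * k} = {..<r*k} \<union> {r*k..<r*k+k}" by auto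
  have "(\<Sum>j<Suc r*k. h (j div k)) = (\<Sum>j<r*k. h (j div k)) + (\<Sum>j\<in>{r*k..<r*k+k}. h (j div k))"
    unfolding e by (rule sum.union_disjoint) auto
  also have "(\<Sum>j\<in>{r*k..<r*k+k}. h (j div k)) = (\<Sum>j\<in>{r*k..<r*k+k}. h r)"
  proof (rule sum.cong)
    fix j assume "j \<in> {r*k..<r*k+k}"
    then have "j div k = r" using div_eq_range[OF k, of j r] by simp
    then show "h (j div k) = h r" by simp
  qed simp
  finally show ?case using Suc by (simp add: algebra_simps)
qed

lemma sum_const_block:
  fixes x :: "nat \<Rightarrow> real"
  assumes "\<And>j. j \<in> {a..<a+m} \<Longrightarrow> x j = c"
  shows "(\<Sum>j\<in>{a..<a+m}. x j) = real m * c"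
proof -
  have "(\<Sum>j\<in>{a..<a+m}. x j) = (\<Sum>j\<in>{a..<a+m}. c)" by (rule sum.cong) (use assms in auto)
  then show ?thesis by simp
qed

lemma L_block_S:
  fixes f g :: "nat \<Rightarrow> real"
  assumes k: "k > 0" and t: "t > 0" and u: "u < r*k"
  shows "(\<Sum>j<r*(k+t). laplacian (r*(k+t)) (split_adj k t r) $$ (u,j) *
            (if j < r*k then f (j div k) else g ((j - r*k) div t)))
     = (real r * real k + real t) * f (u div k) - real k * (\<Sum>p<r. f p) - real t * g (u div k)"
proof -
  let ?x = "\<lambda>j. if j < r*k then f (j div k) else g ((j - r*k) div t)"
  have s1: "(\<Sum>j<r*k. ?x j) = real k * (\<Sum>p<r. f p)"
    using sum_blocks[OF k, of f r] by simp
  have s2: "(\<Sum>j\<in>{r*k + (u div k)*t ..< r*k + (u div k)*t + t}. ?x j) = real t * g (u div k)"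
  proof (rule sum_const_block)
    fix j assume j: "j \<in> {r*k + (u div k)*t ..< r*k + (u div k)*t + t}"
    then have "(u div k)*t \<le> j - r*k" "j - r*k < (u div k)*t + t" by auto
    then have "(j - r*k) div t = u div k" using div_eq_range[OF t] by simp
    then show "?x j = g (u div k)" using j by simp
  qed
  show ?thesis unfolding L_S[OF k t u, of ?x] s1 s2 using u by simp
qed

lemma L_block_A:
  fixes f g :: "nat \<Rightarrow> real"
  assumes k: "k > 0" and t: "t > 0" and u1: "r*k \<le> u" and u2: "u < r*(k+t)"
  shows "(\<Sum>j<r*(k+t). laplacian (r*(k+t)) (split_adj k t r) $$ (u,j) *
            (if j < r*k then f (j div k) else g ((j - r*k) div t)))
     = real k * g ((u - r*k) div t) - real k * f ((u - r*k) div t)"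
proof -
  let ?x = "\<lambda>j. if j < r*k then f (j div k) else g ((j - r*k) div t)"
  let ?p = "(u - r*k) div t"
  have "u - r*k < r*t" using u1 u2 by (simp add: algebra_simps)
  then have pl: "?p*k + k \<le> r*k" using part_le2[OF t] by simp
  have s: "(\<Sum>j\<in>{?p*k ..< ?p*k + k}. ?x j) = real k * f ?p"
  proof (rule sum_const_block)
    fix j assume j: "j \<in> {?p*k ..< ?p*k + k}"
    then have jr: "j < r*k" using pl by auto
    have "j div k = ?p" using j div_eq_range[OF k] by simp
    then show "?x j = f ?p" using jr by simp
  qed
  show ?thesis unfolding L_A[OF k t u1 u2, of ?x] s using u1 by simp
qed
lemma eig_from_fun:
  fixes x :: "nat \<Rightarrow> real" and A :: "real mat"
  assumes A: "A \<in> carrier_mat n n" and i0: "i0 < n" "x i0 \<noteq> 0"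
    and eq: "\<And>i. i < n \<Longrightarrow> (\<Sum>j<n. A $$ (i,j) * x j) = \<mu> * x i"
  shows "eigenvalue A \<mu>"
proof -
  let ?v = "vec n x"
  have dr: "dim_row A = n" using A by simp
  have "eigenvector A ?v \<mu>" unfolding eigenvector_def dr
  proof (intro conjI)
    show "?v \<in> carrier_vec n" by simp
    show "?v \<noteq> 0\<^sub>v n"
    proof
      assume "?v = 0\<^sub>v n"
      then have "?v $ i0 = 0\<^sub>v n $ i0" by simp
      then show False using i0 by simp
    qed
    show "A *\<^sub>v ?v = \<mu> \<cdot>\<^sub>v ?v"
    proof (rule eq_vecI)
      fix i assume "i < dim_vec (\<mu> \<cdot>\<^sub>v ?v)"
      then have i: "i < n" by simp
      have "(A *\<^sub>v ?v) $ i = (\<Sum>j<n. A $$ (i,j) * ?v $ j)" by (rule mult_vec_eq[OF A _ i]) simp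
      also have "\<dots> = (\<Sum>j<n. A $$ (i,j) * x j)" by (rule sum.cong) auto
      also have "\<dots> = \<mu> * x i" by (rule eq[OF i])
      finally show "(A *\<^sub>v ?v) $ i = (\<mu> \<cdot>\<^sub>v ?v) $ i" using i by simp
    qed (use A in simp)
  qed
  then show ?thesis unfolding eigenvalue_def by blast
qed

lemma fun_from_eig:
  fixes A :: "real mat"
  assumes A: "A \<in> carrier_mat n n" and ev: "eigenvalue A \<mu>"
  shows "\<exists>x. (\<exists>i<n. x i \<noteq> 0) \<and> (\<forall>i<n. (\<Sum>j<n. A $$ (i,j) * x j) = \<mu> * x i)"
proof -
  have dr: "dim_row A = n" using A by simp
  obtain v where v: "v \<in> carrier_vec n" "v \<noteq> 0\<^sub>v n" "A *\<^sub>v v = \<mu> \<cdot>\<^sub>v v"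
    using ev unfolding eigenvalue_def eigenvector_def dr by blast
  have dv: "dim_vec v = n" using v by simp
  have "\<exists>i<n. v $ i \<noteq> 0"
  proof (rule ccontr)
    assume "\<not> (\<exists>i<n. v $ i \<noteq> 0)"
    then have "v = 0\<^sub>v n" by (intro eq_vecI) (auto simp: dv)
    then show False using v by simp
  qed
  moreover have "\<forall>i<n. (\<Sum>j<n. A $$ (i,j) * v $ j) = \<mu> * v $ i"
  proof (intro allI impI)
    fix i assume i: "i < n"
    have "(\<Sum>j<n. A $$ (i,j) * v $ j) = (A *\<^sub>v v) $ i" by (rule mult_vec_eq[OF A dv i, symmetric])
    also have "\<dots> = \<mu> * v $ i" using v(3) i dv by simp
    finally show "(\<Sum>j<n. A $$ (i,j) * v $ j) = \<mu> * v $ i" .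
  qed
  ultimately show ?thesis by blast
qed

lemma small_eig:
  assumes k: "k > 0" and t: "t > 0" and r: "r \<ge> 2"
  shows "\<exists>\<mu>. 0 < \<mu> \<and> \<mu> < real k \<and> eigenvalue (laplacian (r*(k+t)) (split_adj k t r)) \<mu>"
proof -
  define a :: real where "a = real r * real k + real t + real k"
  define D :: real where "D = a^2 - 4 * real r * real k ^ 2"
  define \<mu> where "\<mu> = (a - sqrt D) / 2"
  have kp: "real k > 0" "real t > 0" and rp: "real r \<ge> 2" using k t r by auto
  have D0: "D \<ge> 0"
  proof -
    have "D = (real r * real k + real t + real k)^2 - 4 * real r * real k ^ 2" unfolding D_def a_def ..
    also have "\<dots> = (real r * real k - real k)^2 + real t * (real t + 2* real r * real k + 2 * real k)"
      by (simp add: power2_eq_square algebra_simps)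
    also have "\<dots> \<ge> 0" using kp rp by (intro add_nonneg_nonneg) auto
    finally show ?thesis .
  qed
  have sq: "sqrt D ^ 2 = D" using D0 by simp
  have quad: "\<mu> * \<mu> - a * \<mu> + real r * real k * real k = 0"
    unfolding \<mu>_def using sq unfolding D_def by (simp add: power2_eq_square field_simps)
  have "real r * real k \<ge> 0" by simp
  then have apos: "a > 0" unfolding a_def using kp by linarith
  have "D < a^2" unfolding D_def using kp rp by simp
  then have "sqrt D < a" using apos D0 by (metis abs_of_pos real_sqrt_abs real_sqrt_less_iff)
  then have mpos: "\<mu> > 0" unfolding \<mu>_def by simp
  have "(a - 2 * real k)^2 < D"
  proof -
    have "D - (a - 2 * real k)^2 = 4 * real k * real t"
      unfolding D_def a_def by (simp add: power2_eq_square algebra_simps)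
    moreover have "4 * real k * real t > 0" using kp by simp
    ultimately show ?thesis by linarith
  qed
  then have "a - 2 * real k < sqrt D" using real_less_rsqrt by blast
  then have mk: "\<mu> < real k" unfolding \<mu>_def by simp
  define f :: "nat \<Rightarrow> real" where "f p = (if p = 0 then real k - \<mu> else 0) + (if p = 1 then \<mu> - real k else 0)" for p
  define g :: "nat \<Rightarrow> real" where "g p = (if p = 0 then real k else 0) + (if p = 1 then - real k else 0)" for p
  define x where "x j = (if j < r*k then f (j div k) else g ((j - r*k) div t))" for j
  have sf: "(\<Sum>p<r. f p) = 0"
    unfolding f_def using r by (simp add: sum.distrib)
  show ?thesis
  proof (intro exI conjI)
    show "0 < \<mu>" "\<mu> < real k" by fact+
    show "eigenvalue (laplacian (r*(k+t)) (split_adj k t r)) \<mu>"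
    proof (rule eig_from_fun[OF L_carrier, of 0])
      have "0 < r*k" using k r by simp
      then show "0 < r*(k+t)" by (simp add: algebra_simps)
      show "x 0 \<noteq> 0" unfolding x_def f_def using \<open>0 < r*k\<close> mk by simp
      fix i assume i: "i < r*(k+t)"
      show "(\<Sum>j<r*(k+t). laplacian (r*(k+t)) (split_adj k t r) $$ (i,j) * x j) = \<mu> * x i"
      proof (cases "i < r*k")
        case True
        have "(\<Sum>j<r*(k+t). laplacian (r*(k+t)) (split_adj k t r) $$ (i,j) * x j)
           = (real r * real k + real t) * f (i div k) - real k * (\<Sum>p<r. f p) - real t * g (i div k)"
          unfolding x_def by (rule L_block_S[OF k t True])
        also have "\<dots> = \<mu> * x i" unfolding sf x_def using True quad
          by (auto simp: f_def g_def algebra_simps a_def)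
        finally show ?thesis .
      next
        case False
        then have ge: "r*k \<le> i" by simp
        have "(\<Sum>j<r*(k+t). laplacian (r*(k+t)) (split_adj k t r) $$ (i,j) * x j)
           = real k * g ((i - r*k) div t) - real k * f ((i - r*k) div t)"
          unfolding x_def by (rule L_block_A[OF k t ge i])
        also have "\<dots> = \<mu> * x i" unfolding x_def using False
          by (auto simp: f_def g_def algebra_simps)
        finally show ?thesis .
      qed
    qed
  qed
qed
lemma split_sum_kt:
  fixes x :: "nat \<Rightarrow> real"
  shows "(\<Sum>j<k+t. x j) = (\<Sum>j<k. x j) + (\<Sum>j\<in>{k..<k+t}. x j)"
proof -
  have e: "{..<k+t} = {..<k} \<union> {k..<k+t}" by auto
  show ?thesis unfolding e by (rule sum.union_disjoint) auto
qed

lemma L1_S: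
  fixes x :: "nat \<Rightarrow> real"
  assumes k: "k > 0" and t: "t > 0" and u: "u < k"
  shows "(\<Sum>j<k+t. laplacian (k+t) (split_adj k t 1) $$ (u,j) * x j)
     = (real k + real t) * x u - (\<Sum>j<k+t. x j)"
proof -
  have u1: "u < 1*k" using u by simp
  have d: "u div k = 0" using u by simp
  show ?thesis using L_S[OF k t u1, of x] unfolding d by (simp add: split_sum_kt[of x k t])
qed

lemma L1_A:
  fixes x :: "nat \<Rightarrow> real"
  assumes k: "k > 0" and t: "t > 0" and u1: "k \<le> u" and u2: "u < k+t"
  shows "(\<Sum>j<k+t. laplacian (k+t) (split_adj k t 1) $$ (u,j) * x j)
     = real k * x u - (\<Sum>j<k. x j)"
proof -
  have v1: "1*k \<le> u" and v2: "u < 1*(k+t)" using u1 u2 by simp_all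
  have d: "(u - 1*k) div t = 0" using u1 u2 by simp
  show ?thesis using L_A[OF k t v1 v2, of x] unfolding d by (simp add: atLeast0LessThan)
qed

lemma r1_roots:
  fixes x :: "nat \<Rightarrow> real"
  assumes k: "k > 0" and t: "t > 0" and nz: "i0 < k+t" "x i0 \<noteq> 0"
    and eq: "\<And>i. i < k+t \<Longrightarrow> (\<Sum>j<k+t. laplacian (k+t) (split_adj k t 1) $$ (i,j) * x j) = \<mu> * x i"
  shows "\<mu> = 0 \<or> \<mu> = real k \<or> \<mu> = real k + real t"
proof (rule ccontr)
  assume "\<not> ?thesis"
  then have m0: "\<mu> \<noteq> 0" and mk: "\<mu> \<noteq> real k" and mn: "\<mu> \<noteq> real k + real t" by auto
  define T where "T = (\<Sum>j<k+t. x j)"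
  define \<sigma> where "\<sigma> = (\<Sum>j<k. x j)"
  define c1 where "c1 = T / (real k + real t - \<mu>)"
  define c2 where "c2 = \<sigma> / (real k - \<mu>)"
  have xS: "x u = c1" if u: "u < k" for u
  proof -
    have "(real k + real t) * x u - T = \<mu> * x u" using eq[of u] L1_S[OF k t u, of x] u unfolding T_def by simp
    then have "(real k + real t - \<mu>) * x u = T" by (simp add: algebra_simps)
    then show ?thesis unfolding c1_def using mn by (simp add: field_simps)
  qed
  have xA: "x u = c2" if u: "k \<le> u" "u < k+t" for u
  proof -
    have "real k * x u - \<sigma> = \<mu> * x u" using eq[of u] L1_A[OF k t u, of x] u unfolding \<sigma>_def by simp
    then have "(real k - \<mu>) * x u = \<sigma>" by (simp add: algebra_simps)
    then show ?thesis unfolding c2_def using mk by (simp add: field_simps)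
  qed
  have s1: "\<sigma> = real k * c1" unfolding \<sigma>_def using xS by simp
  have s2: "(\<Sum>j\<in>{k..<k+t}. x j) = real t * c2" by (rule sum_const_block) (use xA in auto)
  have sT: "T = real k * c1 + real t * c2" unfolding T_def split_sum_kt s2 s1[unfolded \<sigma>_def] ..
  have "real k + real t - \<mu> \<noteq> 0" using mn by simp
  then have "(real k + real t - \<mu>) * c1 = T" unfolding c1_def by simp
  then have e1: "(real k + real t - \<mu>) * c1 = real k * c1 + real t * c2" using sT by simp
  have "real k - \<mu> \<noteq> 0" using mk by simp
  then have e2: "(real k - \<mu>) * c2 = real k * c1" unfolding c2_def using s1 by simp
  have e1': "real t * c2 = (real t - \<mu>) * c1" using e1 by (simp add: algebra_simps)
  have h: "(real k - \<mu>) * ((real t - \<mu>) * c1) = real t * (real k * c1)"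
  proof -
    have "(real k - \<mu>) * ((real t - \<mu>) * c1) = (real k - \<mu>) * (real t * c2)" using e1' by simp
    also have "\<dots> = real t * ((real k - \<mu>) * c2)" by (simp add: algebra_simps)
    also have "\<dots> = real t * (real k * c1)" using e2 by simp
    finally show ?thesis .
  qed
  have "c1 * (\<mu> * (\<mu> - real k - real t)) = (real k - \<mu>) * ((real t - \<mu>) * c1) - real t * (real k * c1)"
    by (simp add: algebra_simps)
  then have "c1 * (\<mu> * (\<mu> - real k - real t)) = 0" using h by simp
  then have c10: "c1 = 0" using m0 mn by auto
  then have c20: "c2 = 0" using e2 mk by simp
  show False
  proof (cases "i0 < k")
    case True then show False using xS[OF True] c10 nz by simp
  next
    case False then show False using xA[of i0] c20 nz by simp
  qed
qed

lemma r1_kernel: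
  fixes x :: "nat \<Rightarrow> real"
  assumes k: "k > 0" and t: "t > 0" and x0: "x 0 = 0"
    and eq: "\<And>i. i < k+t \<Longrightarrow> (\<Sum>j<k+t. laplacian (k+t) (split_adj k t 1) $$ (i,j) * x j) = c"
  shows "\<forall>i<k+t. x i = 0"
proof -
  define T where "T = (\<Sum>j<k+t. x j)"
  have S: "(real k + real t) * x u - T = c" if u: "u < k" for u
    using eq[of u] L1_S[OF k t u, of x] u unfolding T_def by simp
  have cT: "c = - T" using S[OF k] x0 by simp
  have xS: "x u = 0" if u: "u < k" for u
  proof -
    have "(real k + real t) * x u = 0" using S[OF u] cT by simp
    moreover have "real k + real t \<noteq> 0" using k by simp
    ultimately show ?thesis by simp
  qed
  have sig: "(\<Sum>j<k. x j) = 0" using xS by simp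
  have xA: "x u = - T / real k" if u: "k \<le> u" "u < k+t" for u
  proof -
    have "real k * x u - (\<Sum>j<k. x j) = c" using eq[of u] L1_A[OF k t u, of x] u by simp
    then have "real k * x u = - T" using sig cT by simp
    then show ?thesis using k by (simp add: field_simps)
  qed
  have sA: "(\<Sum>j\<in>{k..<k+t}. x j) = real t * (- T / real k)" by (rule sum_const_block) (use xA in auto)
  have "T = (\<Sum>j<k. x j) + (\<Sum>j\<in>{k..<k+t}. x j)" unfolding T_def by (rule split_sum_kt)
  then have "T = real t * (- T / real k)" using sig sA by simp
  then have "T * real k = - real t * T" using k by (simp add: field_simps)
  then have "T * (real k + real t) = 0" by (simp add: algebra_simps)
  moreover have "real k + real t \<noteq> 0" using k by simp
  ultimately have T0: "T = 0" by simp
  show ?thesis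
  proof (intro allI impI)
    fix i assume "i < k+t"
    then show "x i = 0" using xS[of i] xA[of i] T0 by (cases "i < k") auto
  qed
qed

lemma r1_k_eig:
  assumes k: "k > 0" and t: "t \<ge> 2"
  shows "eigenvalue (laplacian (k+t) (split_adj k t 1)) (real k)"
proof -
  have t0: "t > 0" using t by simp
  define x :: "nat \<Rightarrow> real" where "x j = (if j = k then 1 else if j = k+1 then -1 else 0)" for j
  have T: "(\<Sum>j<k+t. x j) = 0"
  proof -
    have a1: "(\<Sum>j<k+t. (if j = k then 1 else 0)) = (1::real)" using t by (subst sum.delta) auto
    have a2: "(\<Sum>j<k+t. (if j = k+1 then -1 else 0)) = (-1::real)" using t by (subst sum.delta) auto
    have "(\<Sum>j<k+t. x j) = (\<Sum>j<k+t. (if j = k then 1 else 0) + (if j = k+1 then -1 else 0))"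
      by (rule sum.cong) (auto simp: x_def)
    also have "\<dots> = (\<Sum>j<k+t. (if j = k then 1 else 0)) + (\<Sum>j<k+t. (if j = k+1 then -1 else 0))"
      by (rule sum.distrib)
    finally show ?thesis using a1 a2 by simp
  qed
  have sg: "(\<Sum>j<k. x j) = 0" by (rule sum.neutral) (auto simp: x_def)
  show ?thesis
  proof (rule eig_from_fun[OF L_carrier, of k])
    show "k < k+t" "x k \<noteq> 0" using t by (auto simp: x_def)
    fix i assume i: "i < k+t"
    show "(\<Sum>j<k+t. laplacian (k+t) (split_adj k t 1) $$ (i,j) * x j) = real k * x i"
    proof (cases "i < k")
      case True then show ?thesis using L1_S[OF k t0 True, of x] T by (simp add: x_def)
    next
      case False then show ?thesis using L1_A[OF k t0 _ i, of x] sg by simp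
    qed
  qed
qed

lemma r1_rowsum:
  assumes k: "k > 0" and t: "t > 0" and i: "i < k+t"
  shows "(\<Sum>j<k+t. laplacian (k+t) (split_adj k t 1) $$ (i,j)) = 0"
proof (cases "i < k")
  case True then show ?thesis using L1_S[OF k t True, of "\<lambda>_. 1"] by simp
next
  case False then show ?thesis using L1_A[OF k t _ i, of "\<lambda>_. 1"] by simp
qed
definition PP :: "nat \<Rightarrow> real mat" where
  "PP n = mat n n (\<lambda>(i,j). if j = 0 then 1 else if i = j then 1 else 0)"
definition QQ :: "nat \<Rightarrow> real mat" where
  "QQ n = mat n n (\<lambda>(i,j). if i = j then 1 else if j = 0 then -1 else 0)"
definition BB :: "nat \<Rightarrow> real mat \<Rightarrow> real mat" where
  "BB n L = mat n n (\<lambda>(i,j). if j = 0 then 0 else L $$ (i,j) - (if i = 0 then 0 else L $$ (0,j)))"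

lemma mult_entry:
  assumes "A \<in> carrier_mat n n" "B \<in> carrier_mat n n" "i < n" "j < n"
  shows "(A * B) $$ (i,j) = (\<Sum>l<n. A $$ (i,l) * B $$ (l,j))"
  using assms by (auto simp: scalar_prod_def atLeast0LessThan intro!: sum.cong)

lemma sum_P:
  fixes G :: "nat \<Rightarrow> real"
  assumes i: "i < n"
  shows "(\<Sum>l<n. PP n $$ (i,l) * G l) = G 0 + (if i = 0 then 0 else G i)"
proof -
  have n: "0 < n" using i by simp
  have "(\<Sum>l<n. PP n $$ (i,l) * G l) = (\<Sum>l<n. (if l = 0 then G 0 else 0) + (if i = 0 then 0 else (if l = i then G i else 0)))"
    by (rule sum.cong) (use i in \<open>auto simp: PP_def\<close>)
  also have "\<dots> = (\<Sum>l<n. (if l = 0 then G 0 else 0)) + (\<Sum>l<n. (if i = 0 then 0 else (if l = i then G i else 0)))"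
    by (rule sum.distrib)
  also have "\<dots> = G 0 + (if i = 0 then 0 else G i)"
    using i n by (cases "i = 0") (simp_all add: sum.delta)
  finally show ?thesis .
qed

lemma sum_Q:
  fixes G :: "nat \<Rightarrow> real"
  assumes i: "i < n"
  shows "(\<Sum>l<n. QQ n $$ (i,l) * G l) = G i - (if i = 0 then 0 else G 0)"
proof -
  have n: "0 < n" using i by simp
  have "(\<Sum>l<n. QQ n $$ (i,l) * G l) = (\<Sum>l<n. (if l = i then G i else 0) + (if i = 0 then 0 else (if l = 0 then - G 0 else 0)))"
    by (rule sum.cong) (use i in \<open>auto simp: QQ_def\<close>)
  also have "\<dots> = (\<Sum>l<n. (if l = i then G i else 0)) + (\<Sum>l<n. (if i = 0 then 0 else (if l = 0 then - G 0 else 0)))"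
    by (rule sum.distrib)
  also have "\<dots> = G i - (if i = 0 then 0 else G 0)"
    using i n by (cases "i = 0") (simp_all add: sum.delta)
  finally show ?thesis .
qed

lemma sum_Pr:
  fixes G :: "nat \<Rightarrow> real"
  assumes j: "j < n"
  shows "(\<Sum>l<n. G l * PP n $$ (l,j)) = (if j = 0 then (\<Sum>l<n. G l) else G j)"
proof (cases "j = 0")
  case True
  have "(\<Sum>l<n. G l * PP n $$ (l,j)) = (\<Sum>l<n. G l)"
    by (rule sum.cong) (use j True in \<open>auto simp: PP_def\<close>)
  then show ?thesis using True by simp
next
  case False
  have "(\<Sum>l<n. G l * PP n $$ (l,j)) = (\<Sum>l<n. if l = j then G j else 0)"
    by (rule sum.cong) (use j False in \<open>auto simp: PP_def\<close>)
  then show ?thesis using False j by (simp add: sum.delta)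
qed

lemma PP_carrier: "PP n \<in> carrier_mat n n" by (simp add: PP_def)
lemma QQ_carrier: "QQ n \<in> carrier_mat n n" by (simp add: QQ_def)
lemma BB_carrier: "BB n L \<in> carrier_mat n n" by (simp add: BB_def)

lemma PQ: "PP n * QQ n = 1\<^sub>m n"
proof (rule eq_matI)
  fix i j assume "i < dim_row (1\<^sub>m n :: real mat)" "j < dim_col (1\<^sub>m n :: real mat)"
  then have i: "i < n" and j: "j < n" by auto
  have "(PP n * QQ n) $$ (i,j) = (\<Sum>l<n. PP n $$ (i,l) * QQ n $$ (l,j))"
    by (rule mult_entry[OF PP_carrier QQ_carrier i j])
  also have "\<dots> = QQ n $$ (0,j) + (if i = 0 then 0 else QQ n $$ (i,j))" by (rule sum_P[OF i])
  also have "\<dots> = 1\<^sub>m n $$ (i,j)" using i j by (auto simp: QQ_def)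
  finally show "(PP n * QQ n) $$ (i,j) = 1\<^sub>m n $$ (i,j)" .
qed (auto simp: PP_def QQ_def)

lemma QP: "QQ n * PP n = 1\<^sub>m n"
proof (rule eq_matI)
  fix i j assume "i < dim_row (1\<^sub>m n :: real mat)" "j < dim_col (1\<^sub>m n :: real mat)"
  then have i: "i < n" and j: "j < n" by auto
  have "(QQ n * PP n) $$ (i,j) = (\<Sum>l<n. QQ n $$ (i,l) * PP n $$ (l,j))"
    by (rule mult_entry[OF QQ_carrier PP_carrier i j])
  also have "\<dots> = (if j = 0 then (\<Sum>l<n. QQ n $$ (i,l)) else QQ n $$ (i,j))" by (rule sum_Pr[OF j])
  also have "(\<Sum>l<n. QQ n $$ (i,l)) = (\<Sum>l<n. QQ n $$ (i,l) * (\<lambda>_. 1) l)" by simp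
  also have "\<dots> = 1 - (if i = 0 then 0 else 1)" by (rule sum_Q[OF i])
  also have "(if j = 0 then 1 - (if i = 0 then 0 else 1) else QQ n $$ (i,j)) = 1\<^sub>m n $$ (i,j)"
    using i j by (auto simp: QQ_def)
  finally show "(QQ n * PP n) $$ (i,j) = 1\<^sub>m n $$ (i,j)" .
qed (auto simp: PP_def QQ_def)

lemma LP_PB:
  fixes L :: "real mat"
  assumes L: "L \<in> carrier_mat n n" and rs: "\<And>i. i < n \<Longrightarrow> (\<Sum>j<n. L $$ (i,j)) = 0"
  shows "L * PP n = PP n * BB n L"
proof (rule eq_matI)
  fix i j assume "i < dim_row (PP n * BB n L)" "j < dim_col (PP n * BB n L)"
  then have i: "i < n" and j: "j < n" by (auto simp: PP_def BB_def)
  have "(L * PP n) $$ (i,j) = (\<Sum>l<n. L $$ (i,l) * PP n $$ (l,j))"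
    by (rule mult_entry[OF L PP_carrier i j])
  also have "\<dots> = (if j = 0 then (\<Sum>l<n. L $$ (i,l)) else L $$ (i,j))" by (rule sum_Pr[OF j])
  also have "\<dots> = (if j = 0 then 0 else L $$ (i,j))" using rs[OF i] by simp
  finally have a: "(L * PP n) $$ (i,j) = (if j = 0 then 0 else L $$ (i,j))" .
  have "(PP n * BB n L) $$ (i,j) = (\<Sum>l<n. PP n $$ (i,l) * BB n L $$ (l,j))"
    by (rule mult_entry[OF PP_carrier BB_carrier i j])
  also have "\<dots> = BB n L $$ (0,j) + (if i = 0 then 0 else BB n L $$ (i,j))" by (rule sum_P[OF i])
  also have "\<dots> = (if j = 0 then 0 else L $$ (i,j))" using i j by (auto simp: BB_def)
  finally show "(L * PP n) $$ (i,j) = (PP n * BB n L) $$ (i,j)" using a by simp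
qed (use L in \<open>auto simp: PP_def BB_def\<close>)

lemma char_poly_split:
  fixes L :: "real mat"
  assumes L: "L \<in> carrier_mat n n" and n: "0 < n" and rs: "\<And>i. i < n \<Longrightarrow> (\<Sum>j<n. L $$ (i,j)) = 0"
  shows "char_poly L = monom 1 1 * char_poly (mat_delete (BB n L) 0 0)"
proof -
  have "L = L * 1\<^sub>m n" using L by simp
  also have "\<dots> = L * (PP n * QQ n)" by (simp add: PQ)
  also have "\<dots> = (L * PP n) * QQ n" using assoc_mult_mat[OF L PP_carrier QQ_carrier] by simp
  also have "\<dots> = PP n * BB n L * QQ n" by (simp add: LP_PB[OF L rs])
  finally have e: "L = PP n * BB n L * QQ n" .
  have "similar_mat L (BB n L)"
    by (rule similar_matI[OF _ PQ QP e]) (use L PP_carrier QQ_carrier BB_carrier in auto)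
  then have "char_poly L = char_poly (BB n L)" by (rule char_poly_similar)
  also have "\<dots> = monom 1 1 * char_poly (mat_delete (BB n L) 0 0)"
    by (rule char_poly_0_column[OF _ BB_carrier n]) (simp add: BB_def)
  finally show ?thesis .
qed

lemma M_entry:
  assumes i: "i < n - 1" and j: "j < n - 1"
  shows "mat_delete (BB n L) 0 0 $$ (i,j) = L $$ (Suc i, Suc j) - L $$ (0, Suc j)"
  using i j by (simp add: mat_delete_def BB_def)
lemma r1_M_nonsing:
  assumes k: "k > 0" and t: "t > 0"
  shows "\<not> eigenvalue (mat_delete (BB (k+t) (laplacian (k+t) (split_adj k t 1))) 0 0) 0"
proof
  let ?L = "laplacian (k+t) (split_adj k t 1)"
  let ?M = "mat_delete (BB (k+t) ?L) 0 0"
  define m where "m = k + t - 1"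
  have nm: "k+t = Suc m" using k unfolding m_def by simp
  have Mc: "?M \<in> carrier_mat m m" using mat_delete_carrier[OF BB_carrier, of "k+t" ?L 0 0] nm by simp
  assume "eigenvalue ?M 0"
  then obtain x where x0: "\<exists>i<m. x i \<noteq> 0" and ex: "\<forall>i<m. (\<Sum>j<m. ?M $$ (i,j) * x j) = 0 * x i"
    using fun_from_eig[OF Mc] by blast
  define y where "y l = (if l = 0 then 0 else x (l - 1))" for l
  define S where "S u = (\<Sum>l<k+t. ?L $$ (u,l) * y l)" for u
  have shift: "S u = (\<Sum>j<m. ?L $$ (u, Suc j) * x j)" for u
    unfolding S_def nm lessThan_atLeast0 sum.atLeast0_lessThan_Suc_shift by (simp add: y_def)
  have SS: "S u = S 0" if u: "u < k+t" for u
  proof (cases u)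
    case 0 then show ?thesis by simp
  next
    case (Suc i)
    then have i: "i < m" using u nm by simp
    have "0 = (\<Sum>j<m. ?M $$ (i,j) * x j)" using ex i by simp
    also have "\<dots> = (\<Sum>j<m. (?L $$ (Suc i, Suc j) - ?L $$ (0, Suc j)) * x j)"
      by (rule sum.cong) (use i nm M_entry[of i "k+t" _ ?L] in auto)
    also have "\<dots> = S (Suc i) - S 0" unfolding shift by (simp add: left_diff_distrib sum_subtractf)
    finally show ?thesis using Suc by simp
  qed
  have "\<forall>i<k+t. y i = 0"
    by (rule r1_kernel[OF k t, of y "S 0"]) (use SS in \<open>auto simp: y_def S_def\<close>)
  then show False using x0 nm unfolding y_def by (metis Suc_less_eq diff_Suc_1 nat.distinct(1))
qed

lemma r1_order0:
  assumes k: "k > 0" and t: "t > 0"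
  shows "order 0 (char_poly (laplacian (k+t) (split_adj k t 1))) = 1"
proof -
  let ?L = "laplacian (k+t) (split_adj k t 1)"
  let ?M = "mat_delete (BB (k+t) ?L) 0 0"
  have Mc: "?M \<in> carrier_mat (k+t-1) (k+t-1)" using mat_delete_carrier[OF BB_carrier] by simp
  have e: "char_poly ?L = monom 1 1 * char_poly ?M"
    by (rule char_poly_split[OF L_carrier]) (use k r1_rowsum[OF k t] in auto)
  have q: "poly (char_poly ?M) 0 \<noteq> 0"
    using r1_M_nonsing[OF k t] eigenvalue_root_char_poly[OF Mc] by simp
  then have qn: "char_poly ?M \<noteq> 0" by auto
  have m1: "monom (1::real) 1 = [:-0, 1:] ^ 1" by (simp add: monom_altdef)
  have "order 0 (monom 1 1 * char_poly ?M) = order 0 (monom (1::real) 1) + order 0 (char_poly ?M)"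
    by (rule order_mult) (use qn in simp)
  also have "order 0 (monom (1::real) 1) = 1" unfolding m1 by (rule order_power_n_n)
  also have "order 0 (char_poly ?M) = 0" by (rule order_0I[OF q])
  finally show ?thesis unfolding e by simp
qed
lemma list_r1:
  fixes xs :: "real list"
  assumes so: "sorted xs" and c0: "count (mset xs) 0 = 1" and kin: "kk \<in> set xs" and kp: "kk > 0"
    and al: "\<forall>y\<in>set xs. y = 0 \<or> y \<ge> kk"
  shows "xs ! 1 = kk"
proof (cases xs)
  case Nil then show ?thesis using kin by simp
next
  case (Cons a ys)
  have z: "0 \<in> set xs" using c0 by (metis count_eq_zero_iff set_mset_mset zero_neq_one)
  have a_le: "\<forall>y\<in>set ys. a \<le> y" and soy: "sorted ys" using so Cons by auto
  have "a \<le> 0" using z Cons a_le by auto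
  then have a0: "a = 0" using al Cons kp by force
  have "count (mset ys) 0 = 0" using c0 Cons a0 by simp
  then have z2: "0 \<notin> set ys" by (metis count_eq_zero_iff set_mset_mset)
  have kys: "kk \<in> set ys" using kin Cons a0 kp by auto
  then obtain b zs where ys: "ys = b # zs" by (cases ys) auto
  have "b \<le> kk" using soy kys ys by auto
  moreover have "b \<ge> kk" using al Cons ys z2 by auto
  ultimately show ?thesis using Cons ys by simp
qed

lemma list_r2:
  fixes xs :: "real list"
  assumes so: "sorted xs" and z: "0 \<in> set xs" and m: "\<mu> \<in> set xs" and mp: "\<mu> > 0"
  shows "xs ! 1 \<le> \<mu>"
proof (cases xs)
  case Nil then show ?thesis using z by simp
next
  case (Cons a ys)
  have "\<exists>w\<in>set ys. w \<le> \<mu>"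
  proof (rule ccontr)
    assume "\<not> ?thesis"
    then have "0 \<notin> set ys" "\<mu> \<notin> set ys" using mp by force+
    then have "0 = a" "\<mu> = a" using z m Cons by auto
    then show False using mp by simp
  qed
  then obtain w where w: "w \<in> set ys" "w \<le> \<mu>" by blast
  then obtain b zs where ys: "ys = b # zs" by (cases ys) auto
  have "sorted ys" using so Cons by simp
  then have "b \<le> w" using w ys by auto
  then show ?thesis using Cons ys w by simp
qed

lemma char_poly_nz:
  fixes A :: "real mat"
  assumes "A \<in> carrier_mat n n"
  shows "char_poly A \<noteq> 0"
  using degree_monic_char_poly[OF assms] by auto

lemma eigs_set:
  "set (laplacian_eigenvalues n adj) = {x. eigenvalue (laplacian n adj) x}"
proof -
  have nz: "char_poly (laplacian n adj) \<noteq> 0" by (rule char_poly_nz[OF L_carrier])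
  show ?thesis unfolding laplacian_eigenvalues_def set_sorted_list_of_multiset
    using nz eigenvalue_root_char_poly[OF L_carrier] by simp
qed

theorem mainTheorem8:
  fixes k t r :: nat
  assumes "k \<ge> 1" and "t \<ge> 1" and "r \<ge> 1"
  shows "(r = 1 \<and> t \<ge> 2 \<longrightarrow>
            algebraic_connectivity (split_n k t r) (split_adj k t r)
              = real (vertex_connectivity (split_n k t r) (split_adj k t r)))
       \<and> (r \<ge> 2 \<longrightarrow>
            algebraic_connectivity (split_n k t r) (split_adj k t r)
              \<noteq> real (vertex_connectivity (split_n k t r) (split_adj k t r)))"
proof (intro conjI impI)
  have k: "k > 0" and t: "t > 0" using assms by auto
  {
    assume c: "r = 1 \<and> t \<ge> 2"
    then have r1: "r = 1" and t2: "t \<ge> 2" by auto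
    have kap: "vertex_connectivity (k+t) (split_adj k t 1) = k"
      using kappa[OF k t, of 1] c by simp
    let ?L = "laplacian (k+t) (split_adj k t 1)"
    let ?xs = "laplacian_eigenvalues (k+t) (split_adj k t 1)"
    have nz: "char_poly ?L \<noteq> 0" by (rule char_poly_nz[OF L_carrier])
    have so: "sorted ?xs" unfolding laplacian_eigenvalues_def by simp
    have c0: "count (mset ?xs) 0 = 1"
      unfolding laplacian_eigenvalues_def using nz r1_order0[OF k t] by simp
    have kin: "real k \<in> set ?xs" unfolding eigs_set using r1_k_eig[OF k t2] by simp
    have al: "\<forall>y\<in>set ?xs. y = 0 \<or> y \<ge> real k"
    proof
      fix y assume "y \<in> set ?xs"
      then have "eigenvalue ?L y" unfolding eigs_set by simp
      then obtain x where x: "\<exists>i<k+t. x i \<noteq> 0" "\<forall>i<k+t. (\<Sum>j<k+t. ?L $$ (i,j) * x j) = y * x i"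
        using fun_from_eig[OF L_carrier] by blast
      then obtain i0 where "i0 < k+t" "x i0 \<noteq> 0" by blast
      then have "y = 0 \<or> y = real k \<or> y = real k + real t" using r1_roots[OF k t] x(2) by blast
      then show "y = 0 \<or> y \<ge> real k" by auto
    qed
    have "?xs ! 1 = real k" by (rule list_r1[OF so c0 kin _ al]) (use k in simp)
    then show "algebraic_connectivity (split_n k t r) (split_adj k t r)
              = real (vertex_connectivity (split_n k t r) (split_adj k t r))"
      using kap r1 unfolding algebraic_connectivity_def split_n_def by simp
  }
  {
    assume r2: "r \<ge> 2"
    have kap: "vertex_connectivity (r*(k+t)) (split_adj k t r) = k"
      using kappa[OF k t] r2 by simp
    let ?L = "laplacian (r*(k+t)) (split_adj k t r)"
    let ?xs = "laplacian_eigenvalues (r*(k+t)) (split_adj k t r)"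
    obtain \<mu> where mu: "0 < \<mu>" "\<mu> < real k" "eigenvalue ?L \<mu>" using small_eig[OF k t r2] by blast
    have so: "sorted ?xs" unfolding laplacian_eigenvalues_def by simp
    have min: "\<mu> \<in> set ?xs" unfolding eigs_set using mu by simp
    have z: "0 \<in> set ?xs" unfolding eigs_set
    proof (simp, rule eig_from_fun[OF L_carrier, of 0 _ "\<lambda>_. 1"])
      have "0 < r*k" using k r2 by simp
      then show "0 < r*(k+t)" by (simp add: algebra_simps)
      fix i assume i: "i < r*(k+t)"
      show "(\<Sum>j<r*(k+t). ?L $$ (i,j) * 1) = 0 * 1"
      proof (cases "i < r*k")
        case True then show ?thesis using L_S[OF k t True, of "\<lambda>_. 1"] by simp
      next
        case False then show ?thesis using L_A[OF k t _ i, of "\<lambda>_. 1"] by simp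
      qed
    qed simp
    have "?xs ! 1 \<le> \<mu>" by (rule list_r2[OF so z min mu(1)])
    then show "algebraic_connectivity (split_n k t r) (split_adj k t r)
              \<noteq> real (vertex_connectivity (split_n k t r) (split_adj k t r))"
      using kap mu(2) unfolding algebraic_connectivity_def split_n_def by simp
  }
qed
end
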